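(* Let $I$ be a single-category instance with $n$ agents, $m$ goods and cardinality constraint $k$ with $m\le kn$. Let $\mathcal{A}^*=(A^*_1,\dots,A^*_n)$ be a utilitarian-optimal allocation, and let $R=\{i:|A^*_i|<k\}$ and $S=\{i:|A^*_i|>k\}$, and suppose $S\neq\emptyset$. Then there exist an agent $i^\dagger\in R$ and a cardinal allocation $\mathcal{A}$ such that $$\text{USW}(\mathcal{A})\ge 1+\sum_{i\in S}\frac{k}{|A^*_i|}\bigl(u_i(A^*_i)-u_{i^\dagger}(A^*_i)\bigr).$$
   Context: Each agent $i$ has an additive utility function $u_i:2^M\to\mathbb{R}_{\ge 0}$ with $u_i(\emptyset)=0$ and $u_i(M)=1$. An allocation is a partition $(A_1,\dots,A_n)$ of $M$; it is cardinal if $|A_i|\le k$ for all $i$. $\text{USW}(\mathcal{A})=\sum_i u_i(A_i)$; a utilitarian-optimal allocation is one maximizing $\text{USW}$ over all allocations. *)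

theory Defs
  imports Complex_Main
begin

definition util :: "(nat \<Rightarrow> 'g \<Rightarrow> real) \<Rightarrow> nat \<Rightarrow> 'g set \<Rightarrow> real" where
  "util v i B = (\<Sum>g\<in>B. v i g)"

definition normalized_additive :: "nat \<Rightarrow> 'g set \<Rightarrow> (nat \<Rightarrow> 'g \<Rightarrow> real) \<Rightarrow> bool" where
  "normalized_additive n M v \<longleftrightarrow>
     (\<forall>i<n. (\<forall>g\<in>M. v i g \<ge> 0) \<and> util v i M = 1)"

definition is_allocation :: "nat \<Rightarrow> 'g set \<Rightarrow> (nat \<Rightarrow> 'g set) \<Rightarrow> bool" where
  "is_allocation n M A \<longleftrightarrow>
     (\<forall>i<n. \<forall>j<n. i \<noteq> j \<longrightarrow> A i \<inter> A j = {}) \<and> (\<Union>i<n. A i) = M"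

definition is_cardinal :: "nat \<Rightarrow> nat \<Rightarrow> (nat \<Rightarrow> 'g set) \<Rightarrow> bool" where
  "is_cardinal n k A \<longleftrightarrow> (\<forall>i<n. card (A i) \<le> k)"

definition usw :: "nat \<Rightarrow> (nat \<Rightarrow> 'g \<Rightarrow> real) \<Rightarrow> (nat \<Rightarrow> 'g set) \<Rightarrow> real" where
  "usw n v A = (\<Sum>i<n. util v i (A i))"

definition util_optimal :: "nat \<Rightarrow> 'g set \<Rightarrow> (nat \<Rightarrow> 'g \<Rightarrow> real) \<Rightarrow> (nat \<Rightarrow> 'g set) \<Rightarrow> bool" where
  "util_optimal n M v A \<longleftrightarrow> is_allocation n M A \<and>
     (\<forall>B. is_allocation n M B \<longrightarrow> usw n v B \<le> usw n v A)"

end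

theory Submission
  imports Defs
begin


lemma avg_pick:
  fixes s :: "nat \<Rightarrow> nat" and F :: "nat \<Rightarrow> real"
  assumes "finite R" "(\<Sum>j\<in>R. real (s j) * F j) = P" "sum s R > 0"
  shows "\<exists>j\<in>R. s j > 0 \<and> P \<le> real (sum s R) * F j"
proof (rule ccontr)
  assume "\<not> ?thesis"
  hence h: "\<forall>j\<in>R. s j > 0 \<longrightarrow> real (sum s R) * F j < P" by auto
  obtain j0 where j0: "j0 \<in> R" "s j0 > 0" proof -
    have "\<exists>j\<in>R. s j \<noteq> 0" using assms(3) by (metis sum.neutral less_irrefl)
    thus ?thesis using that by auto
  qed
  have "(\<Sum>j\<in>R. real (s j) * (real (sum s R) * F j)) < (\<Sum>j\<in>R. real (s j) * P)"
  proof (rule sum_strict_mono_ex1[OF assms(1)])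
    show "\<forall>x\<in>R. real (s x) * (real (sum s R) * F x) \<le> real (s x) * P"
    proof
      fix x assume "x \<in> R"
      show "real (s x) * (real (sum s R) * F x) \<le> real (s x) * P"
      proof (cases "s x = 0")
        case False thus ?thesis using h \<open>x \<in> R\<close> by (intro mult_left_mono) auto
      qed simp
    qed
    show "\<exists>a\<in>R. real (s a) * (real (sum s R) * F a) < real (s a) * P"
      using h j0 by (intro bexI[of _ j0]) (auto intro: mult_strict_left_mono simp del: of_nat_sum)
  qed
  also have "\<dots> = real (sum s R) * P" by (simp add: sum_distrib_right)
  finally have "real (sum s R) * (\<Sum>j\<in>R. real (s j) * F j) < real (sum s R) * P"
    by (simp add: sum_distrib_left mult.left_commute)
  with assms(2) show False by simp
qed

lemma spread:
  fixes v :: "nat \<Rightarrow> 'g \<Rightarrow> real" and s :: "nat \<Rightarrow> nat" and L :: "'g set"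
  assumes "finite L" "finite R" "card L \<le> sum s R"
  shows "\<exists>D. (\<forall>j\<in>R. D j \<subseteq> L \<and> card (D j) \<le> s j) \<and> (\<forall>i\<in>R. \<forall>j\<in>R. i \<noteq> j \<longrightarrow> D i \<inter> D j = {})
     \<and> (\<Union>j\<in>R. D j) = L
     \<and> (\<Sum>g\<in>L. \<Sum>j\<in>R. real (s j) * v j g) \<le> real (sum s R) * (\<Sum>j\<in>R. \<Sum>g\<in>D j. v j g)"
  using assms
proof (induction "card L" arbitrary: L s)
  case 0
  then have "L = {}" by simp
  then show ?case by (intro exI[of _ "\<lambda>_. {}"]) simp
next
  case (Suc m)
  have "L \<noteq> {}" using Suc.hyps(2) by auto
  then obtain g where g: "g \<in> L" by auto
  define L' where "L' = L - {g}"
  define N where "N = sum s R"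
  define psi where "psi x = (\<Sum>j\<in>R. real (s j) * v j x)" for x
  have finL': "finite L'" using Suc.prems(1) by (simp add: L'_def)
  have cardL': "card L' = m" using Suc.hyps(2) Suc.prems(1) g by (simp add: L'_def)
  have N1: "N \<ge> 1" using Suc.prems(3) Suc.hyps(2) by (simp add: N_def)
  have L'e: "L' = {}" if "N = 1"
  proof -
    have "m = 0" using Suc.prems(3) Suc.hyps(2) that by (simp add: N_def)
    thus ?thesis using cardL' finL' by simp
  qed
  define F where "F j = v j g + ((\<Sum>x\<in>L'. psi x) - (\<Sum>x\<in>L'. v j x)) / (real N - 1)" for j
  have sumF: "(\<Sum>j\<in>R. real (s j) * F j) = (\<Sum>x\<in>L. psi x)"
  proof -
    have a: "(\<Sum>j\<in>R. real (s j) * F j) = psi g + (\<Sum>j\<in>R. real (s j) * ((\<Sum>x\<in>L'. psi x) - (\<Sum>x\<in>L'. v j x))) / (real N - 1)"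
      by (simp add: F_def psi_def distrib_left sum.distrib sum_divide_distrib)
    have b: "(\<Sum>j\<in>R. real (s j) * ((\<Sum>x\<in>L'. psi x) - (\<Sum>x\<in>L'. v j x))) = real N * (\<Sum>x\<in>L'. psi x) - (\<Sum>x\<in>L'. psi x)"
    proof -
      have "(\<Sum>j\<in>R. real (s j) * ((\<Sum>x\<in>L'. psi x) - (\<Sum>x\<in>L'. v j x)))
          = (\<Sum>j\<in>R. real (s j)) * (\<Sum>x\<in>L'. psi x) - (\<Sum>j\<in>R. \<Sum>x\<in>L'. real (s j) * v j x)"
      proof -
        have "(\<Sum>j\<in>R. real (s j) * ((\<Sum>x\<in>L'. psi x) - (\<Sum>x\<in>L'. v j x)))
          = (\<Sum>j\<in>R. real (s j) * (\<Sum>x\<in>L'. psi x)) - (\<Sum>j\<in>R. real (s j) * (\<Sum>x\<in>L'. v j x))"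
          by (simp add: right_diff_distrib sum_subtractf)
        also have "(\<Sum>j\<in>R. real (s j) * (\<Sum>x\<in>L'. psi x)) = (\<Sum>j\<in>R. real (s j)) * (\<Sum>x\<in>L'. psi x)"
          by (rule sum_distrib_right[symmetric])
        also have "(\<Sum>j\<in>R. real (s j) * (\<Sum>x\<in>L'. v j x)) = (\<Sum>j\<in>R. \<Sum>x\<in>L'. real (s j) * v j x)"
          by (simp add: sum_distrib_left)
        finally show ?thesis .
      qed
      also have "(\<Sum>j\<in>R. \<Sum>x\<in>L'. real (s j) * v j x) = (\<Sum>x\<in>L'. psi x)"
        unfolding psi_def by (rule sum.swap)
      finally show ?thesis by (simp add: N_def)
    qed
    have c: "(\<Sum>j\<in>R. real (s j) * ((\<Sum>x\<in>L'. psi x) - (\<Sum>x\<in>L'. v j x))) / (real N - 1) = (\<Sum>x\<in>L'. psi x)"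
    proof (cases "N = 1")
      case True thus ?thesis using L'e by simp
    next
      case False
      hence "real N - 1 \<noteq> 0" using N1 by simp
      thus ?thesis unfolding b by (simp add: field_simps)
    qed
    have "(\<Sum>x\<in>L. psi x) = psi g + (\<Sum>x\<in>L'. psi x)"
      unfolding L'_def using sum.remove[OF Suc.prems(1) g] .
    thus ?thesis using a c by simp
  qed
  obtain j where j: "j \<in> R" "s j > 0" "(\<Sum>x\<in>L. psi x) \<le> real N * F j"
    using avg_pick[OF Suc.prems(2) sumF] N1 by (auto simp: N_def)
  define s' where "s' = s(j := s j - 1)"
  have sums': "sum s' R = N - 1"
  proof -
    have "sum s R = s j + sum s (R - {j})" using sum.remove[OF Suc.prems(2) j(1)] .
    moreover have "sum s' R = s' j + sum s' (R - {j})" using sum.remove[OF Suc.prems(2) j(1)] .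
    moreover have "sum s' (R - {j}) = sum s (R - {j})" by (rule sum.cong) (auto simp: s'_def)
    ultimately show ?thesis using j(2) by (simp add: s'_def N_def)
  qed
  have "card L' \<le> sum s' R" using cardL' Suc.hyps(2) Suc.prems(3) sums' by (simp add: N_def)
  from Suc.hyps(1)[OF cardL'[symmetric] finL' Suc.prems(2) this]
  obtain D' where D': "\<forall>j\<in>R. D' j \<subseteq> L' \<and> card (D' j) \<le> s' j"
    "\<forall>i\<in>R. \<forall>j\<in>R. i \<noteq> j \<longrightarrow> D' i \<inter> D' j = {}"
    "(\<Union>j\<in>R. D' j) = L'"
    "(\<Sum>g\<in>L'. \<Sum>j\<in>R. real (s' j) * v j g) \<le> real (sum s' R) * (\<Sum>j\<in>R. \<Sum>g\<in>D' j. v j g)"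
    by blast
  have psi': "(\<Sum>i\<in>R. real (s' i) * v i x) = psi x - v j x" for x
  proof -
    have "(\<Sum>i\<in>R. real (s' i) * v i x) = real (s' j) * v j x + (\<Sum>i\<in>R-{j}. real (s' i) * v i x)"
      using sum.remove[OF Suc.prems(2) j(1)] .
    moreover have "psi x = real (s j) * v j x + (\<Sum>i\<in>R-{j}. real (s i) * v i x)"
      unfolding psi_def using sum.remove[OF Suc.prems(2) j(1)] .
    moreover have "(\<Sum>i\<in>R-{j}. real (s' i) * v i x) = (\<Sum>i\<in>R-{j}. real (s i) * v i x)"
      by (rule sum.cong) (auto simp: s'_def)
    ultimately show ?thesis using j(2) by (simp add: s'_def of_nat_diff algebra_simps)
  qed
  define U' where "U' = (\<Sum>i\<in>R. \<Sum>g\<in>D' i. v i g)"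
  define D where "D = D'(j := insert g (D' j))"
  have gD': "g \<notin> D' i" if "i \<in> R" for i using D'(1) that by (auto simp: L'_def)
  have finD': "finite (D' i)" if "i \<in> R" for i using D'(1) that finL' finite_subset by blast
  have sumD: "(\<Sum>i\<in>R. \<Sum>g\<in>D i. v i g) = v j g + U'"
  proof -
    have "(\<Sum>i\<in>R. \<Sum>g\<in>D i. v i g) = (\<Sum>g\<in>D j. v j g) + (\<Sum>i\<in>R-{j}. \<Sum>g\<in>D i. v i g)"
      using sum.remove[OF Suc.prems(2) j(1)] .
    also have "(\<Sum>i\<in>R-{j}. \<Sum>g\<in>D i. v i g) = (\<Sum>i\<in>R-{j}. \<Sum>g\<in>D' i. v i g)"
      by (rule sum.cong) (auto simp: D_def)
    also have "(\<Sum>g\<in>D j. v j g) = v j g + (\<Sum>g\<in>D' j. v j g)"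
      using gD'[OF j(1)] finD'[OF j(1)] by (simp add: D_def)
    finally show ?thesis unfolding U'_def using sum.remove[OF Suc.prems(2) j(1), of "\<lambda>i. \<Sum>g\<in>D' i. v i g"] by simp
  qed
  have FU: "F j \<le> v j g + U'"
  proof (cases "N = 1")
    case True
    hence "L' = {}" by (rule L'e)
    hence "D' i = {}" if "i \<in> R" for i using D'(1) that by auto
    hence "U' = 0" unfolding U'_def by simp
    thus ?thesis using \<open>L' = {}\<close> by (simp add: F_def)
  next
    case False
    hence Npos: "real N - 1 > 0" using N1 by simp
    have "(\<Sum>x\<in>L'. psi x) - (\<Sum>x\<in>L'. v j x) = (\<Sum>x\<in>L'. \<Sum>i\<in>R. real (s' i) * v i x)"
      by (simp add: psi' sum_subtractf)
    also have "\<dots> \<le> (real N - 1) * U'" using D'(4) sums' N1 unfolding U'_def by (simp add: of_nat_diff)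
    finally have "((\<Sum>x\<in>L'. psi x) - (\<Sum>x\<in>L'. v j x)) / (real N - 1) \<le> U'"
      using Npos by (simp add: pos_divide_le_eq mult.commute)
    thus ?thesis by (simp add: F_def)
  qed
  show ?case
  proof (intro exI[of _ D] conjI)
    show "\<forall>i\<in>R. D i \<subseteq> L \<and> card (D i) \<le> s i"
    proof
      fix i assume i: "i \<in> R"
      show "D i \<subseteq> L \<and> card (D i) \<le> s i"
      proof (cases "i = j")
        case True
        have "card (D i) = Suc (card (D' j))" using True gD'[OF j(1)] finD'[OF j(1)] by (simp add: D_def)
        moreover have "card (D' j) \<le> s j - 1" using D'(1) j(1) unfolding s'_def by fastforce
        moreover have "D' j \<subseteq> L" using D'(1) j(1) by (auto simp: L'_def)
        ultimately show ?thesis using True j(2) g by (simp add: D_def)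
      next
        case False
        thus ?thesis using D'(1) i by (auto simp: D_def L'_def s'_def)
      qed
    qed
    show "\<forall>i\<in>R. \<forall>k\<in>R. i \<noteq> k \<longrightarrow> D i \<inter> D k = {}"
      using D'(2) gD' by (auto simp: D_def)
    show "(\<Union>i\<in>R. D i) = L"
      using D'(3) j(1) g by (auto simp: D_def L'_def split: if_splits)
    show "(\<Sum>g\<in>L. \<Sum>j\<in>R. real (s j) * v j g) \<le> real (sum s R) * (\<Sum>j\<in>R. \<Sum>g\<in>D j. v j g)"
    proof -
      have "(\<Sum>g\<in>L. \<Sum>j\<in>R. real (s j) * v j g) \<le> real N * F j" using j(3) by (simp add: psi_def)
      also have "\<dots> \<le> real N * (v j g + U')" using FU by (intro mult_left_mono) auto
      finally show ?thesis using sumD by (simp add: N_def)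
    qed
  qed
qed

lemma choose_k:
  fixes f :: "'g \<Rightarrow> real"
  assumes "finite A" "k \<le> card A"
  shows "\<exists>T. T \<subseteq> A \<and> card T = k \<and> real k * (\<Sum>g\<in>A. f g) \<le> real (card A) * (\<Sum>g\<in>T. f g)"
proof -
  define s :: "nat \<Rightarrow> nat" where "s j = (if j = 0 then k else card A - k)" for j
  define w :: "nat \<Rightarrow> 'g \<Rightarrow> real" where "w j g = (if j = 0 then f g else 0)" for j g
  have sR: "sum s {0, 1} = card A" using assms(2) by (simp add: s_def)
  obtain D where D: "\<forall>j\<in>{0,1}. D j \<subseteq> A \<and> card (D j) \<le> s j"
    "\<forall>i\<in>{0,1}. \<forall>j\<in>{0,1::nat}. i \<noteq> j \<longrightarrow> D i \<inter> D j = {}"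
    "(\<Union>j\<in>{0,1}. D j) = A"
    "(\<Sum>g\<in>A. \<Sum>j\<in>{0,1}. real (s j) * w j g) \<le> real (sum s {0,1}) * (\<Sum>j\<in>{0,1}. \<Sum>g\<in>D j. w j g)"
    using spread[OF assms(1), of "{0,1::nat}" s w] sR by auto
  have fin: "finite (D j)" if "j \<in> {0,1}" for j using D(1) that assms(1) finite_subset by blast
  have "card A = card (D 0 \<union> D 1)" using D(3) by simp
  also have "\<dots> = card (D 0) + card (D 1)" using D(2) fin by (intro card_Un_disjoint) auto
  finally have "card (D 0) \<ge> k" using D(1) assms(2) by (auto simp: s_def)
  hence c0: "card (D 0) = k" using D(1) by (auto simp: s_def)
  have "real k * (\<Sum>g\<in>A. f g) = (\<Sum>g\<in>A. \<Sum>j\<in>{0,1}. real (s j) * w j g)"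
    by (simp add: s_def w_def sum_distrib_left)
  also have "\<dots> \<le> real (card A) * (\<Sum>g\<in>D 0. f g)"
    using D(4) assms(2) by (simp add: w_def s_def of_nat_diff)
  finally show ?thesis using c0 D(1) by (intro exI[of _ "D 0"]) auto
qed


lemma opt_local:
  assumes "util_optimal n M v A" "finite M" "j < n" "i < n" "g \<in> A j"
  shows "v i g \<le> v j g"
proof (rule ccontr)
  assume lt: "\<not> ?thesis"
  hence ij: "i \<noteq> j" by auto
  have al: "is_allocation n M A" and opt: "\<And>B. is_allocation n M B \<Longrightarrow> usw n v B \<le> usw n v A"
    using assms(1) unfolding util_optimal_def by auto
  have dis: "\<forall>x<n. \<forall>y<n. x \<noteq> y \<longrightarrow> A x \<inter> A y = {}" and un: "(\<Union>x<n. A x) = M"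
    using al unfolding is_allocation_def by auto
  have fin: "finite (A x)" if "x < n" for x
  proof -
    have "A x \<subseteq> M" using un that by auto
    thus ?thesis using assms(2) finite_subset by auto
  qed
  have gi: "g \<notin> A i"
  proof -
    have "A i \<inter> A j = {}" using dis assms(3,4) ij by simp
    thus ?thesis using assms(5) by auto
  qed
  have gM: "g \<in> M" using un assms(3,5) by auto
  define B where "B = A(i := insert g (A i), j := A j - {g})"
  have "is_allocation n M B"
    unfolding is_allocation_def
  proof (intro conjI allI impI)
    fix x y assume "x < n" "y < n" "x \<noteq> y"
    show "B x \<inter> B y = {}"
    proof -
      have xy: "A x \<inter> A y = {}" using dis \<open>x < n\<close> \<open>y < n\<close> \<open>x \<noteq> y\<close> by simp
      have gx: "g \<notin> A x" if "x \<noteq> j" using dis \<open>x < n\<close> assms(3,5) that by blast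
      have gy: "g \<notin> A y" if "y \<noteq> j" using dis \<open>y < n\<close> assms(3,5) that by blast
      show ?thesis using xy gx gy \<open>x \<noteq> y\<close> unfolding B_def by auto
    qed
  next
    show "(\<Union>x<n. B x) = M"
    proof
      show "(\<Union>x<n. B x) \<subseteq> M"
      proof
        fix y assume "y \<in> (\<Union>x<n. B x)"
        then obtain x where "x < n" "y \<in> B x" by auto
        hence "y \<in> A x \<or> y = g" unfolding B_def by (auto split: if_splits)
        thus "y \<in> M" using un gM \<open>x < n\<close> by auto
      qed
      show "M \<subseteq> (\<Union>x<n. B x)"
      proof
        fix y assume "y \<in> M"
        then obtain x where x: "x < n" "y \<in> A x" using un by auto
        show "y \<in> (\<Union>x<n. B x)"
        proof (cases "y = g")
          case True thus ?thesis using assms ij unfolding B_def by (intro UN_I[of i]) auto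
        next
          case False thus ?thesis using x unfolding B_def by (intro UN_I[of x]) auto
        qed
      qed
    qed
  qed
  hence le: "usw n v B \<le> usw n v A" by (rule opt)
  have "util v x (B x) = util v x (A x) + (if x = i then v i g else 0) - (if x = j then v j g else 0)" if "x < n" for x
  proof -
    have "x = i \<Longrightarrow> util v x (B x) = util v x (A x) + v i g"
      using ij gi fin[OF assms(4)] unfolding B_def util_def by simp
    moreover have "x = j \<Longrightarrow> util v x (B x) = util v x (A x) - v j g"
      using ij assms(5) fin[OF assms(3)] unfolding B_def util_def by (simp add: sum_diff1)
    moreover have "x \<noteq> i \<Longrightarrow> x \<noteq> j \<Longrightarrow> util v x (B x) = util v x (A x)"
      unfolding B_def by simp
    ultimately show ?thesis using ij by auto
  qed
  hence "usw n v B = (\<Sum>x<n. util v x (A x) + (if x = i then v i g else 0) - (if x = j then v j g else 0))"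
    unfolding usw_def by (intro sum.cong) auto
  also have "\<dots> = usw n v A + v i g - v j g"
    using assms(3,4) by (simp add: sum.distrib sum_subtractf usw_def)
  finally show False using le lt by simp
qed



theorem lemma4:
  fixes n k :: nat and M :: "'g set" and v :: "nat \<Rightarrow> 'g \<Rightarrow> real"
    and Astar :: "nat \<Rightarrow> 'g set"
  assumes "finite M"
    and "normalized_additive n M v"
    and "card M \<le> k * n"
    and "util_optimal n M v Astar"
    and "{i. i < n \<and> card (Astar i) > k} \<noteq> {}"
  shows "\<exists>idag \<in> {i. i < n \<and> card (Astar i) < k}. \<exists>A.
           is_allocation n M A \<and> is_cardinal n k A \<and>
           usw n v A \<ge> 1 + (\<Sum>i\<in>{i. i < n \<and> card (Astar i) > k}.
              (real k / real (card (Astar i))) * (util v i (Astar i) - util v idag (Astar i)))"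
proof -
  define S where "S = {i. i < n \<and> card (Astar i) > k}"
  define R where "R = {i. i < n \<and> card (Astar i) < k}"
  define c where "c i = card (Astar i)" for i
  have al: "is_allocation n M Astar" using assms(4) unfolding util_optimal_def by auto
  have dis: "\<And>x y. x < n \<Longrightarrow> y < n \<Longrightarrow> x \<noteq> y \<Longrightarrow> Astar x \<inter> Astar y = {}"
    and un: "(\<Union>x<n. Astar x) = M"
    using al unfolding is_allocation_def by auto
  have sub: "Astar x \<subseteq> M" if "x < n" for x using un that by auto
  have fin: "finite (Astar x)" if "x < n" for x using sub[OF that] assms(1) finite_subset by auto
  have nonneg: "\<And>i g. i < n \<Longrightarrow> g \<in> M \<Longrightarrow> v i g \<ge> 0" and one: "\<And>i. i < n \<Longrightarrow> util v i M = 1"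
    using assms(2) unfolding normalized_additive_def by auto
  have opt: "\<And>i j g. j < n \<Longrightarrow> i < n \<Longrightarrow> g \<in> Astar j \<Longrightarrow> v i g \<le> v j g"
    using opt_local[OF assms(4,1)] by blast
  have finS: "finite S" and finR: "finite R" by (auto simp: S_def R_def)
  have SR: "S \<inter> R = {}" by (auto simp: S_def R_def)
  have Sn: "S \<subseteq> {..<n}" and Rn: "R \<subseteq> {..<n}" by (auto simp: S_def R_def)
  have cardM: "card M = (\<Sum>i<n. c i)"
    unfolding un[symmetric] c_def using fin dis by (intro card_UN_disjoint) auto
  define l where "l = (\<Sum>i\<in>S. c i - k)"
  define s where "s j = k - c j" for j
  define N where "N = sum s R"
  have lN: "l \<le> N"
  proof -
    have h: "real (\<Sum>i<n. c i) \<le> real k * real n" using assms(3) cardM by (metis of_nat_le_iff of_nat_mult)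
    have "(\<Sum>i<n. real (c i) - real k) \<le> 0"
      using h by (simp add: sum_subtractf mult.commute)
    moreover have "(\<Sum>i<n. real (c i) - real k) = (\<Sum>i\<in>S. real (c i) - real k) + (\<Sum>i\<in>R. real (c i) - real k)"
    proof -
      have "(\<Sum>i<n. real (c i) - real k) = (\<Sum>i\<in>S \<union> R. real (c i) - real k)"
        using Sn Rn by (intro sum.mono_neutral_right) (auto simp: S_def R_def c_def)
      thus ?thesis using SR finS finR by (simp add: sum.union_disjoint)
    qed
    moreover have "real l = (\<Sum>i\<in>S. real (c i) - real k)"
      unfolding l_def by (simp add: S_def c_def of_nat_diff)
    moreover have "real N = (\<Sum>i\<in>R. real k - real (c i))"
      unfolding N_def s_def by (simp add: R_def c_def of_nat_diff)
    ultimately have "real l \<le> real N" by (simp add: sum_subtractf)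
    thus ?thesis by simp
  qed
  obtain i0 where i0: "i0 \<in> S" using assms(5) by (auto simp: S_def)
  have l1: "l \<ge> 1"
  proof -
    have "c i0 - k \<le> l" unfolding l_def using finS i0 by (intro member_le_sum) auto
    moreover have "c i0 - k \<ge> 1" using i0 unfolding S_def c_def by simp linarith
    ultimately show ?thesis by linarith
  qed
  have Npos: "N > 0" using lN l1 by simp
  have kpos: "k > 0"
  proof (rule ccontr)
    assume "\<not> k > 0"
    hence "card M = 0" using assms(3) by simp
    hence "M = {}" using assms(1) by simp
    hence "Astar i0 = {}" using sub[of i0] i0 by (auto simp: S_def)
    thus False using i0 by (simp add: S_def)
  qed
  define phi where "phi g = (\<Sum>j\<in>R. real (s j) * v j g) / real N" for g
  have phiX: "(\<Sum>g\<in>X. phi g) * real N = (\<Sum>j\<in>R. real (s j) * util v j X)" for X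
  proof -
    have "(\<Sum>g\<in>X. phi g) * real N = (\<Sum>g\<in>X. \<Sum>j\<in>R. real (s j) * v j g)"
      using Npos by (simp add: phi_def sum_divide_distrib[symmetric])
    also have "\<dots> = (\<Sum>j\<in>R. \<Sum>g\<in>X. real (s j) * v j g)" by (rule sum.swap)
    also have "\<dots> = (\<Sum>j\<in>R. real (s j) * util v j X)" by (simp add: util_def sum_distrib_left)
    finally show ?thesis .
  qed
  have sumsR: "(\<Sum>j\<in>R. real (s j)) = real N" by (simp add: N_def)
  have phiM: "(\<Sum>g\<in>M. phi g) = 1"
  proof -
    have "(\<Sum>g\<in>M. phi g) * real N = real N"
      unfolding phiX using one sumsR by (simp add: R_def)
    thus ?thesis using Npos by simp
  qed
  have phi_le: "(\<Sum>g\<in>Astar x. phi g) \<le> util v x (Astar x)" if "x < n" for x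
  proof -
    have "(\<Sum>g\<in>Astar x. phi g) * real N = (\<Sum>j\<in>R. real (s j) * util v j (Astar x))" by (rule phiX)
    also have "\<dots> \<le> (\<Sum>j\<in>R. real (s j) * util v x (Astar x))"
    proof (rule sum_mono)
      fix j assume "j \<in> R"
      hence "j < n" by (simp add: R_def)
      hence "util v j (Astar x) \<le> util v x (Astar x)"
        unfolding util_def using opt that by (intro sum_mono) auto
      thus "real (s j) * util v j (Astar x) \<le> real (s j) * util v x (Astar x)"
        by (intro mult_left_mono) auto
    qed
    also have "\<dots> = real N * util v x (Astar x)" using sumsR by (simp only: sum_distrib_right[symmetric])
    finally show ?thesis using Npos by (simp add: mult.commute)
  qed
  have sum_phi_M: "(\<Sum>x<n. \<Sum>g\<in>Astar x. phi g) = 1"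
  proof -
    have "(\<Sum>g\<in>M. phi g) = (\<Sum>x<n. \<Sum>g\<in>Astar x. phi g)"
      unfolding un[symmetric] using fin dis by (intro sum.UNION_disjoint) auto
    thus ?thesis using phiM by simp
  qed
  have Tex: "\<forall>i\<in>S. \<exists>T. T \<subseteq> Astar i \<and> card T = k \<and>
      real k * (\<Sum>g\<in>Astar i. v i g - phi g) \<le> real (c i) * (\<Sum>g\<in>T. v i g - phi g)"
  proof
    fix i assume "i \<in> S"
    hence "i < n" "k \<le> c i" by (auto simp: S_def c_def)
    thus "\<exists>T. T \<subseteq> Astar i \<and> card T = k \<and>
      real k * (\<Sum>g\<in>Astar i. v i g - phi g) \<le> real (c i) * (\<Sum>g\<in>T. v i g - phi g)"
      using choose_k[OF fin[OF \<open>i < n\<close>], of k "\<lambda>g. v i g - phi g"] by (simp add: c_def)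
  qed
  obtain T where T: "\<forall>i\<in>S. T i \<subseteq> Astar i \<and> card (T i) = k \<and>
      real k * (\<Sum>g\<in>Astar i. v i g - phi g) \<le> real (c i) * (\<Sum>g\<in>T i. v i g - phi g)"
    using bchoice[OF Tex] by blast
  have TA: "T i \<subseteq> Astar i" and cT: "card (T i) = k"
    and Tb: "real k * (\<Sum>g\<in>Astar i. v i g - phi g) \<le> real (c i) * (\<Sum>g\<in>T i. v i g - phi g)"
    if "i \<in> S" for i using T that by auto
  have Sn': "i < n" if "i \<in> S" for i using that by (simp add: S_def)
  have Rn': "i < n" if "i \<in> R" for i using that by (simp add: R_def)
  have finT: "finite (T i)" if "i \<in> S" for i using fin[OF Sn'[OF that]] TA[OF that] finite_subset by auto
  define L where "L = (\<Union>i\<in>S. Astar i - T i)"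
  have finL: "finite L" unfolding L_def using finS fin Sn' by auto
  have disL: "(Astar i - T i) \<inter> (Astar j - T j) = {}" if "i \<in> S" "j \<in> S" "i \<noteq> j" for i j
    using dis[OF Sn'[OF that(1)] Sn'[OF that(2)] that(3)] by auto
  have cardL: "card L = l"
  proof -
    have "card L = (\<Sum>i\<in>S. card (Astar i - T i))"
      unfolding L_def using finS fin Sn' disL by (intro card_UN_disjoint) auto
    also have "\<dots> = (\<Sum>i\<in>S. c i - k)"
      using TA finT cT by (intro sum.cong) (auto simp: c_def card_Diff_subset)
    finally show ?thesis by (simp add: l_def)
  qed
  have "card L \<le> sum s R" using cardL lN by (simp add: N_def)
  from spread[OF finL finR this, of v]
  obtain D where D1: "\<forall>j\<in>R. D j \<subseteq> L \<and> card (D j) \<le> s j"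
    and D2: "\<forall>i\<in>R. \<forall>j\<in>R. i \<noteq> j \<longrightarrow> D i \<inter> D j = {}"
    and D3: "(\<Union>j\<in>R. D j) = L"
    and D4: "(\<Sum>g\<in>L. \<Sum>j\<in>R. real (s j) * v j g) \<le> real (sum s R) * (\<Sum>j\<in>R. \<Sum>g\<in>D j. v j g)"
    by blast
  have DL: "D j \<subseteq> L" and cD: "card (D j) \<le> s j" if "j \<in> R" for j using D1 that by auto
  have finD: "finite (D j)" if "j \<in> R" for j using DL[OF that] finL finite_subset by auto
  have Lmem: "\<exists>i\<in>S. g \<in> Astar i \<and> g \<notin> T i" if "g \<in> L" for g using that by (auto simp: L_def)
  have LAx: "Astar x \<inter> L = {}" if "x < n" "x \<notin> S" for x
  proof -
    { fix g assume g: "g \<in> Astar x" "g \<in> L"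
      then obtain i where i: "i \<in> S" "g \<in> Astar i" using Lmem by blast
      hence "i \<noteq> x" using that by auto
      hence False using dis[OF that(1) Sn'[OF i(1)]] g i by auto }
    thus ?thesis by auto
  qed
  have LT: "T x \<inter> L = {}" if "x \<in> S" for x
  proof -
    { fix g assume g: "g \<in> T x" "g \<in> L"
      then obtain i where i: "i \<in> S" "g \<in> Astar i" "g \<notin> T i" using Lmem by blast
      hence "i \<noteq> x" using g by auto
      hence False using dis[OF Sn'[OF that] Sn'[OF i(1)]] g i TA[OF that] by auto }
    thus ?thesis by auto
  qed
  have LM: "L \<subseteq> M" unfolding L_def using sub Sn' by auto
  have phiL: "(\<Sum>g\<in>L. phi g) \<le> (\<Sum>j\<in>R. util v j (D j))"
  proof -
    have "(\<Sum>g\<in>L. phi g) * real N = (\<Sum>g\<in>L. \<Sum>j\<in>R. real (s j) * v j g)"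
      using Npos by (simp add: phi_def sum_divide_distrib[symmetric])
    also have "\<dots> \<le> real N * (\<Sum>j\<in>R. util v j (D j))" using D4 by (simp add: N_def util_def)
    finally show ?thesis using Npos by (simp add: mult.commute)
  qed
  have phiL2: "(\<Sum>g\<in>L. phi g) = (\<Sum>i\<in>S. (\<Sum>g\<in>Astar i. phi g) - (\<Sum>g\<in>T i. phi g))"
  proof -
    have "(\<Sum>g\<in>L. phi g) = (\<Sum>i\<in>S. \<Sum>g\<in>Astar i - T i. phi g)"
      unfolding L_def using finS fin Sn' disL by (intro sum.UNION_disjoint) auto
    also have "\<dots> = (\<Sum>i\<in>S. (\<Sum>g\<in>Astar i. phi g) - (\<Sum>g\<in>T i. phi g))"
      using TA fin Sn' by (intro sum.cong) (auto simp: sum_diff)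
    finally show ?thesis .
  qed
  define A where "A i = (if i \<in> S then T i else if i \<in> R then Astar i \<union> D i else Astar i)" for i
  have Aal: "is_allocation n M A"
    unfolding is_allocation_def
  proof (intro conjI allI impI)
    fix x y assume xy: "x < n" "y < n" "x \<noteq> y"
    have d: "Astar x \<inter> Astar y = {}" using dis xy by simp
    have tx: "x \<in> S \<Longrightarrow> T x \<subseteq> Astar x \<and> T x \<inter> L = {}" using TA LT by auto
    have ty: "y \<in> S \<Longrightarrow> T y \<subseteq> Astar y \<and> T y \<inter> L = {}" using TA LT by auto
    have ax: "x \<notin> S \<Longrightarrow> Astar x \<inter> L = {}" using LAx xy by auto
    have ay: "y \<notin> S \<Longrightarrow> Astar y \<inter> L = {}" using LAx xy by auto
    have dx: "x \<in> R \<Longrightarrow> D x \<subseteq> L" using DL by auto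
    have dy: "y \<in> R \<Longrightarrow> D y \<subseteq> L" using DL by auto
    have dd: "x \<in> R \<Longrightarrow> y \<in> R \<Longrightarrow> D x \<inter> D y = {}" using D2 xy by auto
    have SRd: "x \<in> S \<Longrightarrow> x \<notin> R" "y \<in> S \<Longrightarrow> y \<notin> R" using SR by auto
    show "A x \<inter> A y = {}"
      unfolding A_def using d tx ty ax ay dx dy dd SRd by (auto split: if_splits) blast+
  next
    show "(\<Union>x<n. A x) = M"
    proof
      show "(\<Union>x<n. A x) \<subseteq> M"
      proof
        fix g assume "g \<in> (\<Union>x<n. A x)"
        then obtain x where x: "x < n" "g \<in> A x" by auto
        have "A x \<subseteq> Astar x \<union> L" unfolding A_def using TA DL by auto
        thus "g \<in> M" using x sub LM by auto
      qed
      show "M \<subseteq> (\<Union>x<n. A x)"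
      proof
        fix g assume "g \<in> M"
        then obtain x where x: "x < n" "g \<in> Astar x" using un by auto
        show "g \<in> (\<Union>x<n. A x)"
        proof (cases "x \<in> S")
          case True
          show ?thesis
          proof (cases "g \<in> T x")
            case True thus ?thesis using \<open>x \<in> S\<close> x by (auto simp: A_def)
          next
            case False
            hence "g \<in> L" using \<open>x \<in> S\<close> x by (auto simp: L_def)
            then obtain j where j: "j \<in> R" "g \<in> D j" using D3 by auto
            hence "g \<in> A j" "j < n" using SR Rn' by (auto simp: A_def)
            thus ?thesis by auto
          qed
        next
          case False
          hence "g \<in> A x" using x by (auto simp: A_def)
          thus ?thesis using x by auto
        qed
      qed
    qed
  qed
  have Acard: "is_cardinal n k A"
    unfolding is_cardinal_def
  proof (intro allI impI)
    fix x assume x: "x < n"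
    show "card (A x) \<le> k"
    proof (cases "x \<in> S")
      case True thus ?thesis using cT by (simp add: A_def)
    next
      case False
      show ?thesis
      proof (cases "x \<in> R")
        case True
        have "card (Astar x \<union> D x) \<le> card (Astar x) + card (D x)" by (rule card_Un_le)
        also have "\<dots> \<le> k" using cD[OF True] True unfolding s_def R_def c_def by simp linarith
        finally show ?thesis using True False by (simp add: A_def)
      next
        case False
        thus ?thesis using \<open>x \<notin> S\<close> x by (simp add: A_def S_def R_def)
      qed
    qed
  qed
  define uA where "uA i = util v i (Astar i)" for i
  define pA where "pA i = (\<Sum>g\<in>Astar i. phi g)" for i
  define Q where "Q = 1 + (\<Sum>i\<in>S. (real k / real (c i)) * (uA i - pA i))"
  have uAx: "util v x (A x) = (if x \<in> S then util v x (T x) else uA x) + (if x \<in> R then util v x (D x) else 0)"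
    if "x < n" for x
  proof (cases "x \<in> R")
    case True
    hence "x \<notin> S" using SR by auto
    have "Astar x \<inter> D x = {}" using LAx[OF that \<open>x \<notin> S\<close>] DL[OF True] by auto
    hence "util v x (Astar x \<union> D x) = uA x + util v x (D x)"
      unfolding util_def uA_def using fin[OF that] finD[OF True] by (simp add: sum.union_disjoint)
    thus ?thesis using True \<open>x \<notin> S\<close> by (simp add: A_def)
  next
    case False thus ?thesis by (simp add: A_def uA_def)
  qed
  have usw_eq: "usw n v A = (\<Sum>x<n. if x \<in> S then util v x (T x) else uA x) + (\<Sum>x\<in>R. util v x (D x))"
  proof -
    have "usw n v A = (\<Sum>x<n. (if x \<in> S then util v x (T x) else uA x) + (if x \<in> R then util v x (D x) else 0))"
      unfolding usw_def using uAx by (intro sum.cong) auto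
    also have "\<dots> = (\<Sum>x<n. if x \<in> S then util v x (T x) else uA x) + (\<Sum>x<n. if x \<in> R then util v x (D x) else 0)"
      by (rule sum.distrib)
    also have "(\<Sum>x<n. if x \<in> R then util v x (D x) else 0) = (\<Sum>x\<in>{..<n} \<inter> R. util v x (D x))"
      by (rule sum.inter_restrict[symmetric]) simp
    also have "{..<n} \<inter> R = R" using Rn by auto
    finally show ?thesis .
  qed
  have Tb': "util v x (T x) - (\<Sum>g\<in>T x. phi g) \<ge> (real k / real (c x)) * (uA x - pA x)" if "x \<in> S" for x
  proof -
    have cpos: "real (c x) > 0" using that by (simp add: S_def c_def)
    have "real k * (uA x - pA x) \<le> real (c x) * (util v x (T x) - (\<Sum>g\<in>T x. phi g))"
      using Tb[OF that] by (simp add: uA_def pA_def util_def sum_subtractf)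
    thus ?thesis using cpos by (simp add: field_simps)
  qed
  have pw: "(if x \<in> S then util v x (T x) else uA x) + (if x \<in> S then pA x - (\<Sum>g\<in>T x. phi g) else 0)
      \<ge> pA x + (if x \<in> S then (real k / real (c x)) * (uA x - pA x) else 0)" if "x < n" for x
  proof (cases "x \<in> S")
    case True thus ?thesis using Tb'[OF True] by simp
  next
    case False thus ?thesis using phi_le[OF that] by (simp add: uA_def pA_def)
  qed
  have sumS: "(\<Sum>x<n. if x \<in> S then f x else 0) = (\<Sum>x\<in>S. f x)" for f :: "nat \<Rightarrow> real"
  proof -
    have "(\<Sum>x<n. if x \<in> S then f x else 0) = (\<Sum>x\<in>{..<n} \<inter> S. f x)"
      by (rule sum.inter_restrict[symmetric]) simp
    also have "{..<n} \<inter> S = S" using Sn by auto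
    finally show ?thesis .
  qed
  have Qle: "Q \<le> usw n v A"
  proof -
    have "Q = (\<Sum>x<n. pA x + (if x \<in> S then (real k / real (c x)) * (uA x - pA x) else 0))"
      unfolding Q_def using sum_phi_M by (simp add: sum.distrib sumS pA_def)
    also have "\<dots> \<le> (\<Sum>x<n. (if x \<in> S then util v x (T x) else uA x) + (if x \<in> S then pA x - (\<Sum>g\<in>T x. phi g) else 0))"
      using pw by (intro sum_mono) auto
    also have "\<dots> = (\<Sum>x<n. if x \<in> S then util v x (T x) else uA x) + (\<Sum>x\<in>S. pA x - (\<Sum>g\<in>T x. phi g))"
      by (simp add: sum.distrib sumS)
    also have "(\<Sum>x\<in>S. pA x - (\<Sum>g\<in>T x. phi g)) \<le> (\<Sum>j\<in>R. util v j (D j))"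
      using phiL phiL2 by (simp add: pA_def)
    finally show ?thesis using usw_eq by simp
  qed
  define RHS where "RHS j = 1 + (\<Sum>i\<in>S. (real k / real (c i)) * (uA i - util v j (Astar i)))" for j
  have avg: "(\<Sum>j\<in>R. real (s j) * (- RHS j)) = - (real N * Q)"
  proof -
    have "(\<Sum>j\<in>R. real (s j) * RHS j) = (\<Sum>j\<in>R. real (s j)) + (\<Sum>j\<in>R. \<Sum>i\<in>S. real (s j) * ((real k / real (c i)) * (uA i - util v j (Astar i))))"
      by (simp add: RHS_def distrib_left sum.distrib sum_distrib_left)
    also have "(\<Sum>j\<in>R. \<Sum>i\<in>S. real (s j) * ((real k / real (c i)) * (uA i - util v j (Astar i))))
        = (\<Sum>i\<in>S. \<Sum>j\<in>R. real (s j) * ((real k / real (c i)) * (uA i - util v j (Astar i))))"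
      by (rule sum.swap)
    also have "\<dots> = (\<Sum>i\<in>S. (real k / real (c i)) * ((\<Sum>j\<in>R. real (s j)) * uA i - (\<Sum>j\<in>R. real (s j) * util v j (Astar i))))"
      by (intro sum.cong refl) (simp add: sum_distrib_left sum_distrib_right sum_subtractf algebra_simps)
    also have "\<dots> = (\<Sum>i\<in>S. (real k / real (c i)) * (real N * uA i - real N * pA i))"
      using phiX sumsR by (simp add: pA_def mult.commute)
    finally have e: "(\<Sum>j\<in>R. real (s j) * RHS j) = real N + (\<Sum>i\<in>S. (real k / real (c i)) * (real N * uA i - real N * pA i))"
      using sumsR by simp
    have "real N * Q = real N + (\<Sum>i\<in>S. real N * ((real k / real (c i)) * (uA i - pA i)))"
      unfolding Q_def by (simp only: distrib_left mult_1_right sum_distrib_left)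
    also have "(\<Sum>i\<in>S. real N * ((real k / real (c i)) * (uA i - pA i))) = (\<Sum>i\<in>S. (real k / real (c i)) * (real N * uA i - real N * pA i))"
      by (intro sum.cong refl) (simp add: right_diff_distrib mult.left_commute)
    finally have "(\<Sum>j\<in>R. real (s j) * RHS j) = real N * Q" using e by simp
    thus ?thesis by (simp add: sum_negf)
  qed
  obtain j where j: "j \<in> R" "- (real N * Q) \<le> real (sum s R) * (- RHS j)"
    using avg_pick[OF finR avg] Npos by (auto simp: N_def)
  have "real N * RHS j \<le> real N * Q" using j(2) by (simp add: N_def del: of_nat_sum)
  hence "RHS j \<le> Q" using Npos by simp
  hence "RHS j \<le> usw n v A" using Qle by simp
  thus ?thesis
    using j(1) Aal Acard unfolding RHS_def S_def[symmetric] R_def[symmetric] uA_def c_def by blast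
qed
end
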